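(* Let $d,N$ be positive integers, $P=(0,N)^d\cap\mathbb{Z}^d$, $\alpha\ge1$, and let $O\subseteq(0,N)^d$ be an open $\alpha$-fat set with $O\cap P\ne\emptyset$. Then $n_{\ell(O)}(O)\le(4\alpha+1)^d$.
   Context: A $d$-cube is an axis-parallel hypercube; width = side length. In-width of $O$: supremum of widths of $d$-cubes contained in $O$; out-width: infimum of widths of $d$-cubes containing $O$; $O$ is $\alpha$-fat if out-width$(O)\le\alpha\cdot$in-width$(O)$. For a positive integer $i$, $\ell(i)$ is the largest $k\ge0$ with $2^k\mid i$; for $x\in P$, $\ell(x)=\min_i\ell(x_i)$; $\ell(O)=\max\{\ell(x):x\in O\cap P\}$. For an integer $l$, $n_l(O)$ is the number of points of $O\cap P$ of level exactly $l$. *)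

theory Defs
  imports "HOL-Analysis.Analysis"
begin

definition dcube :: "real^'n \<Rightarrow> real \<Rightarrow> (real^'n) set" where
  "dcube a w = {x. \<forall>i. a$i \<le> x$i \<and> x$i \<le> a$i + w}"

definition in_width :: "(real^'n) set \<Rightarrow> real" where
  "in_width S = Sup {w. w > 0 \<and> (\<exists>a. dcube a w \<subseteq> S)}"

definition out_width :: "(real^'n) set \<Rightarrow> real" where
  "out_width S = Inf {w. w > 0 \<and> (\<exists>a. S \<subseteq> dcube a w)}"

definition fat :: "real \<Rightarrow> (real^'n) set \<Rightarrow> bool" where
  "fat \<alpha> S \<longleftrightarrow> out_width S \<le> \<alpha> * in_width S"

definition gridP :: "nat \<Rightarrow> (real^'n) set" where
  "gridP N = {x. \<forall>i. x$i \<in> \<int> \<and> 0 < x$i \<and> x$i < real N}"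

definition lev_int :: "int \<Rightarrow> nat" where
  "lev_int i = (GREATEST k. (2::int)^k dvd i)"

definition lev_pt :: "real^'n \<Rightarrow> nat" where
  "lev_pt x = Min (range (\<lambda>i. lev_int \<lfloor>x$i\<rfloor>))"

definition lev_set :: "nat \<Rightarrow> (real^'n) set \<Rightarrow> nat" where
  "lev_set N S = Max (lev_pt ` (S \<inter> gridP N))"

definition n_lev :: "nat \<Rightarrow> nat \<Rightarrow> (real^'n) set \<Rightarrow> nat" where
  "n_lev N l S = card {x \<in> S \<inter> gridP N. lev_pt x = l}"

end

theory Submission
  imports Defs
begin

lemma int_lt_pow2: "int y < (2::int)^y"
proof -
  have "y < 2^y" by (rule less_exp)
  hence "int y < int (2^y)" by simp
  thus ?thesis by simp
qed

lemma lev_int_ge: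
  assumes "i \<noteq> 0" "(2::int)^k dvd i" shows "k \<le> lev_int i"
  unfolding lev_int_def
proof (rule Greatest_le_nat[where b="nat \<bar>i\<bar>"])
  show "(2::int)^k dvd i" by fact
  fix y assume "(2::int)^y dvd i"
  hence "\<bar>(2::int)^y\<bar> \<le> \<bar>i\<bar>" using dvd_imp_le_int assms(1) by blast
  moreover have "int y < 2^y" by (rule int_lt_pow2)
  ultimately have "int y \<le> \<bar>i\<bar>" by linarith
    thus "y \<le> nat \<bar>i\<bar>" by linarith
qed

lemma lev_int_dvd:
  assumes "i \<noteq> 0" "k \<le> lev_int i" shows "(2::int)^k dvd i"
proof -
  have "(2::int)^(lev_int i) dvd i" unfolding lev_int_def
  proof (rule GreatestI_nat[where k=0 and b="nat \<bar>i\<bar>"])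
    show "(2::int)^0 dvd i" by simp
    fix y assume "(2::int)^y dvd i"
    hence "\<bar>(2::int)^y\<bar> \<le> \<bar>i\<bar>" using dvd_imp_le_int assms(1) by blast
    moreover have "int y < 2^y" by (rule int_lt_pow2)
    ultimately have "int y \<le> \<bar>i\<bar>" by linarith
    thus "y \<le> nat \<bar>i\<bar>" by linarith
  qed
  moreover have "(2::int)^k dvd 2^(lev_int i)" using assms(2) by (simp add: le_imp_power_dvd)
  ultimately show ?thesis using dvd_trans by blast
qed

lemma card_vec_le:
  fixes A :: "(real^'n) set"
  assumes "A \<subseteq> {x. \<forall>i. x$i \<in> T i}" "\<And>i. finite (T i)"
  shows "finite A \<and> card A \<le> (\<Prod>i\<in>UNIV. card (T i))"
proof -
  have inj: "inj_on vec_nth A" by (simp add: inj_on_def vec_nth_inject)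
  have sub: "vec_nth ` A \<subseteq> Pi\<^sub>E UNIV T" using assms(1) by (auto simp: PiE_def extensional_def)
  have fin: "finite (Pi\<^sub>E UNIV T)" by (rule finite_PiE) (auto simp: assms(2))
  hence "finite (vec_nth ` A)" using sub finite_subset by blast
  hence fA: "finite A" using finite_imageD inj by blast
  have "card A = card (vec_nth ` A)" using card_image inj by metis
  also have "\<dots> \<le> card (Pi\<^sub>E UNIV T)" using card_mono fin sub by blast
  also have "\<dots> = (\<Prod>i\<in>UNIV. card (T i))" by (simp add: card_PiE)
  finally show ?thesis using fA by blast
qed

lemma lev_pt_le: "lev_pt x \<le> lev_int \<lfloor>(x::real^'n)$i\<rfloor>"
  unfolding lev_pt_def by (rule Min_le) auto

lemma lev_pt_ge: "(\<And>i. k \<le> lev_int \<lfloor>(x::real^'n)$i\<rfloor>) \<Longrightarrow> k \<le> lev_pt x"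
  unfolding lev_pt_def by (subst Min_ge_iff) auto

theorem corollary2:
  fixes N :: nat and \<alpha> :: real and S :: "(real^'n) set"
  assumes "N > 0" and "\<alpha> \<ge> 1"
    and "open S" and "S \<subseteq> {x. \<forall>i. 0 < x$i \<and> x$i < real N}"
    and "fat \<alpha> S"
    and "S \<inter> gridP N \<noteq> {}"
  shows "real (n_lev N (lev_set N S) S) \<le> (4 * \<alpha> + 1) ^ CARD('n)"
proof -
  note SP = assms(4)
  define L where "L = lev_set N S"
  define s where "s = (2::real)^L"
  have s0: "s > 0" unfolding s_def by simp
  define G where "G = S \<inter> gridP N"
  have "(gridP N :: (real^'n) set) \<subseteq> {x. \<forall>i. x$i \<in> (\<lambda>k. of_int k) ` {0..int N}}"
  proof (intro subsetI CollectI allI)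
    fix x :: "real^'n" and i assume "x \<in> gridP N"
    hence "x$i \<in> \<int>" "0 < x$i" "x$i < real N" unfolding gridP_def by auto
    then obtain k where k: "x$i = of_int k" by (auto elim: Ints_cases)
    with \<open>0 < x$i\<close> \<open>x$i < real N\<close> have "k \<in> {0..int N}" by auto
    thus "x$i \<in> (\<lambda>k. of_int k) ` {0..int N}" using k by blast
  qed
  hence "finite (gridP N :: (real^'n) set)" using card_vec_le[of "gridP N" "\<lambda>_. (\<lambda>k. of_int k) ` {0..int N}"] by auto
  hence finG: "finite G" unfolding G_def by auto
  have maxL: "lev_pt y \<le> L" if "y \<in> G" for y
    unfolding L_def lev_set_def using finG that G_def by (intro Max_ge) auto
  have noL1: False if y: "y \<in> S" and k: "\<And>i. y$i = of_int (2^(Suc L) * k i)" for y k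
  proof -
    have pos: "0 < y$i" "y$i < real N" for i using y SP by auto
    have "y \<in> gridP N" unfolding gridP_def using pos k by auto
    hence yG: "y \<in> G" using y G_def by auto
    have "Suc L \<le> lev_int \<lfloor>y$i\<rfloor>" for i
    proof -
      have fl: "\<lfloor>y$i\<rfloor> = 2^(Suc L) * k i" using k[of i] floor_of_int[of "2^(Suc L) * k i"] by (simp only:)
      have "2^(Suc L) * k i \<noteq> 0" using pos(1)[of i] k[of i] by auto
      thus ?thesis unfolding fl by (intro lev_int_ge) auto
    qed
    hence "Suc L \<le> lev_pt y" by (intro lev_pt_ge)
    thus False using maxL[OF yG] by simp
  qed
  define I where "I = {w. w > 0 \<and> (\<exists>a. dcube a w \<subseteq> S)}"
  obtain x0 where x0: "x0 \<in> S" using assms(6) by auto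
  then obtain e where e: "e > 0" "ball x0 e \<subseteq> S" using assms(3) open_contains_ball by blast
  define \<delta> where "\<delta> = e / (2 * real CARD('n))"
  have d0: "\<delta> > 0" unfolding \<delta>_def using e by simp
  have "dcube x0 \<delta> \<subseteq> ball x0 e"
  proof
    fix y assume "y \<in> dcube x0 \<delta>"
    hence yi: "\<bar>(y - x0)$i\<bar> \<le> \<delta>" for i unfolding dcube_def by (smt (verit) mem_Collect_eq vector_minus_component)
    have "dist x0 y = norm (y - x0)" by (simp add: dist_norm norm_minus_commute)
    also have "\<dots> \<le> (\<Sum>i\<in>UNIV. \<bar>(y - x0)$i\<bar>)" by (rule norm_le_l1_cart)
    also have "\<dots> \<le> (\<Sum>i\<in>(UNIV::'n set). \<delta>)" by (rule sum_mono) (rule yi)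
    also have "\<dots> = e / 2" unfolding \<delta>_def by simp
    finally show "y \<in> ball x0 e" using e by simp
  qed
  hence "\<delta> \<in> I" unfolding I_def using d0 e by blast
  hence Ine: "I \<noteq> {}" by blast
  have Ib: "w \<le> 2 * s" if wI: "w \<in> I" for w
  proof (rule ccontr)
    assume wgt: "\<not> w \<le> 2 * s"
    obtain a where a: "dcube a w \<subseteq> S" using wI I_def by auto
    define y :: "real^'n" where "y = (\<chi> i. 2 * s * of_int (ceiling (a$i / (2 * s))))"
    have "a$i \<le> y$i \<and> y$i \<le> a$i + w" for i
    proof -
      define c where "c = \<lceil>a$i / (2 * s)\<rceil>"
      have c1: "a$i / (2 * s) \<le> of_int c" unfolding c_def by (rule le_of_int_ceiling)
      have c2: "of_int c < a$i / (2 * s) + 1" unfolding c_def using ceiling_correct[of "a$i/(2 * s)"] by linarith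
      have "a$i \<le> 2 * s * of_int c" using c1 s0 by (simp add: field_simps)
      moreover have "2 * s * of_int c < a$i + 2 * s" using c2 s0 by (simp add: field_simps)
      ultimately show ?thesis using wgt unfolding y_def c_def by simp
    qed
    hence "y \<in> S" using a unfolding dcube_def by auto
    moreover have "y$i = of_int (2^(Suc L) * \<lceil>a$i / (2 * s)\<rceil>)" for i
      unfolding y_def s_def by simp
    ultimately show False using noL1[of y "\<lambda>i. \<lceil>a$i / (2 * s)\<rceil>"] by blast
  qed
  have "in_width S \<le> 2 * s" unfolding in_width_def I_def[symmetric] using Ine Ib by (rule cSup_least)
  hence inw: "in_width S \<le> 2 * s" .
  define Ow where "Ow = {w. w > 0 \<and> (\<exists>a. S \<subseteq> dcube a w)}"
  have "S \<subseteq> dcube 0 (real N)" unfolding dcube_def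
  proof (intro subsetI CollectI allI)
    fix x :: "real^'n" and i assume "x \<in> S"
    hence "0 < x$i \<and> x$i < real N" using SP by blast
    thus "0$i \<le> x$i \<and> x$i \<le> 0$i + real N" by simp
  qed
  hence "real N \<in> Ow" unfolding Ow_def using assms(1) by auto
  hence One: "Ow \<noteq> {}" by blast
  have "Inf Ow \<le> \<alpha> * in_width S" using assms(5) unfolding fat_def out_width_def Ow_def by simp
  also have "\<dots> \<le> \<alpha> * (2 * s)" using inw assms(2) by (intro mult_left_mono) auto
  finally have "Inf Ow < 2 * \<alpha> * s + s" using s0 by simp
  then obtain w where "w \<in> Ow" "w < 2 * \<alpha> * s + s" using cInf_lessD[OF One] by blast
  then obtain a where a: "S \<subseteq> dcube a w" and wlt: "w < 2 * \<alpha> * s + s" unfolding Ow_def by auto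
  define A where "A = {x \<in> S \<inter> gridP N. lev_pt x = L}"
  define T where "T = (\<lambda>i. (\<lambda>k. s * of_int k) ` {\<lceil>a$i / s\<rceil>..\<lfloor>(a$i + w) / s\<rfloor>})"
  have AT: "A \<subseteq> {x. \<forall>i. x$i \<in> T i}"
  proof (intro subsetI CollectI allI)
    fix x i assume "x \<in> A"
    hence xS: "x \<in> S" and xg: "x \<in> gridP N" and xl: "lev_pt x = L" unfolding A_def by auto
    have "x$i \<in> \<int>" "0 < x$i" using xg unfolding gridP_def by auto
    then obtain m where m: "x$i = of_int m" by (auto elim: Ints_cases)
    have m0: "m \<noteq> 0" using m \<open>0 < x$i\<close> by auto
    have "L \<le> lev_int \<lfloor>x$i\<rfloor>" using lev_pt_le[of x i] xl by simp
    hence "(2::int)^L dvd m" using m m0 lev_int_dvd by simp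
    then obtain k where k: "m = 2^L * k" by blast
    have xk: "x$i = s * of_int k" unfolding m k s_def by simp
    have "a$i \<le> x$i" "x$i \<le> a$i + w" using a xS unfolding dcube_def by auto
    hence "a$i / s \<le> of_int k" "of_int k \<le> (a$i + w) / s" using s0 xk by (auto simp: field_simps)
    hence "k \<in> {\<lceil>a$i / s\<rceil>..\<lfloor>(a$i + w) / s\<rfloor>}" by (simp add: ceiling_le_iff le_floor_iff)
    thus "x$i \<in> T i" unfolding T_def using xk by blast
  qed
  have finT: "finite (T i)" for i unfolding T_def by simp
  have cardA: "card A \<le> (\<Prod>i\<in>UNIV. card (T i))" using card_vec_le[OF AT finT] by blast
  have cT: "real (card (T i)) \<le> 4 * \<alpha> + 1" for i
  proof -
    have "card (T i) \<le> card {\<lceil>a$i / s\<rceil>..\<lfloor>(a$i + w) / s\<rfloor>}" unfolding T_def by (rule card_image_le) simp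
    also have "\<dots> = nat (\<lfloor>(a$i + w) / s\<rfloor> + 1 - \<lceil>a$i / s\<rceil>)" by simp
    finally have "real (card (T i)) \<le> max 0 (of_int (\<lfloor>(a$i + w) / s\<rfloor> + 1 - \<lceil>a$i / s\<rceil>))"
      by linarith
    moreover have f1: "of_int \<lfloor>(a$i + w) / s\<rfloor> \<le> (a$i + w) / s" by (rule of_int_floor_le)
    moreover have f2: "a$i / s \<le> of_int \<lceil>a$i / s\<rceil>" by (rule le_of_int_ceiling)
    moreover have f3: "(a$i + w) / s - a$i / s = w / s" by (simp add: add_divide_distrib)
    moreover have f4: "w / s < 2 * \<alpha> + 1" using wlt s0 by (simp add: field_simps)
    ultimately have "of_int (\<lfloor>(a$i + w) / s\<rfloor> + 1 - \<lceil>a$i / s\<rceil>) \<le> 4 * \<alpha> + 1"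
      "(0::real) \<le> 4 * \<alpha> + 1" using assms(2) f1 f2 f3 f4 by (simp only: of_int_add of_int_diff of_int_1, linarith)+
    thus ?thesis using \<open>real (card (T i)) \<le> _\<close> by linarith
  qed
  have "real (n_lev N L S) = real (card A)" unfolding n_lev_def A_def by simp
  also have "\<dots> \<le> real (\<Prod>i\<in>UNIV. card (T i))" using cardA of_nat_mono by blast
  also have "\<dots> = (\<Prod>i\<in>UNIV. real (card (T i)))" by (rule of_nat_prod)
  also have "\<dots> \<le> (\<Prod>i\<in>(UNIV::'n set). 4 * \<alpha> + 1)" by (rule prod_mono) (use cT in auto)
  also have "\<dots> = (4 * \<alpha> + 1) ^ CARD('n)" by simp
  finally show ?thesis unfolding L_def .
qed

end
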